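(* Let $\Delta$ be a group and let $A, B$ be subgroups of $\Delta$ with $c(A,B) < \infty$. Then $\mathbf{C}_n(A, \Delta) \simeq \mathbf{C}_n(B, \Delta)$.
   Context: For subgroups $\Delta_1,\Delta_2$ of a group, $c(\Delta_1,\Delta_2) = [\Delta_1:\Delta_1\cap\Delta_2][\Delta_2:\Delta_1\cap\Delta_2]$. For $\Gamma \leq H$, $\mathbf{c}_k(\Gamma,H) \in \mathbb{N}\cup\{\infty\}$ is the cardinality of $\{\Delta \leq H : c(\Gamma,\Delta) = k\}$ and $\mathbf{C}_n(\Gamma,H) = \sum_{k=1}^n \mathbf{c}_k(\Gamma,H)$. For $f,g:\mathbb{N}\to\mathbb{N}\cup\{\infty\}$, $f \preceq g$ means there exists $C>0$ with $f(n) \leq C g(Cn)$ for all $n$; $f \simeq g$ means $f \preceq g$ and $g \preceq f$. *)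

theory Defs
  imports "HOL-Algebra.Coset" "HOL-Library.Extended_Nat"
begin

definition ecard :: "'a set \<Rightarrow> enat" where
  "ecard S = (if finite S then enat (card S) else \<infinity>)"

definition sub_index :: "('a, 'b) monoid_scheme \<Rightarrow> 'a set \<Rightarrow> 'a set \<Rightarrow> enat" where
  "sub_index G H K = ecard {K #>\<^bsub>G\<^esub> h | h. h \<in> H}"

definition commens :: "('a, 'b) monoid_scheme \<Rightarrow> 'a set \<Rightarrow> 'a set \<Rightarrow> enat" where
  "commens G D1 D2 = sub_index G D1 (D1 \<inter> D2) * sub_index G D2 (D1 \<inter> D2)"

definition cnt_k :: "('a, 'b) monoid_scheme \<Rightarrow> 'a set \<Rightarrow> nat \<Rightarrow> enat" where
  "cnt_k G \<Gamma> k = ecard {D. subgroup D G \<and> commens G \<Gamma> D = enat k}"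

definition cnt_C :: "('a, 'b) monoid_scheme \<Rightarrow> 'a set \<Rightarrow> nat \<Rightarrow> enat" where
  "cnt_C G \<Gamma> n = (\<Sum>k\<in>{1..n}. cnt_k G \<Gamma> k)"

definition fpreceq :: "(nat \<Rightarrow> enat) \<Rightarrow> (nat \<Rightarrow> enat) \<Rightarrow> bool" where
  "fpreceq f g \<longleftrightarrow> (\<exists>C::nat. C > 0 \<and> (\<forall>n. f n \<le> enat C * g (C * n)))"

definition fsimeq :: "(nat \<Rightarrow> enat) \<Rightarrow> (nat \<Rightarrow> enat) \<Rightarrow> bool" where
  "fsimeq f g \<longleftrightarrow> fpreceq f g \<and> fpreceq g f"

end

theory Submission
  imports Defs
begin

lemma ecard_image_le: "ecard (h ` S) \<le> ecard S"
  by (cases "finite S") (auto simp: ecard_def card_image_le)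

lemma ecard_mono: "S \<subseteq> T \<Longrightarrow> ecard S \<le> ecard T"
  by (auto simp: ecard_def card_mono dest: finite_subset)

lemma ecard_times: "ecard (S \<times> T) = ecard S * ecard T"
proof (cases "S = {} \<or> T = {}")
  case True
  then show ?thesis by (auto simp: ecard_def zero_enat_def)
next
  case False
  then show ?thesis
    by (cases "finite S"; cases "finite T") (auto simp: ecard_def card_cartesian_product finite_cartesian_product_iff)
qed

lemma ecard_ge1: "S \<noteq> {} \<Longrightarrow> 1 \<le> ecard S"
  by (auto simp: ecard_def one_enat_def Suc_le_eq card_gt_0_iff)

lemma ecard_Un_disjoint: "X \<inter> Y = {} \<Longrightarrow> ecard (X \<union> Y) = ecard X + ecard Y"
  by (cases "finite X"; cases "finite Y") (auto simp: ecard_def card_Un_disjoint)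

lemma ecard_UN_disjoint:
  assumes "finite I" "\<And>i j. i \<in> I \<Longrightarrow> j \<in> I \<Longrightarrow> i \<noteq> j \<Longrightarrow> F i \<inter> F j = {}"
  shows "(\<Sum>i\<in>I. ecard (F i)) = ecard (\<Union>i\<in>I. F i)"
  using assms
proof (induction I rule: finite_induct)
  case empty
  then show ?case by (simp add: ecard_def zero_enat_def)
next
  case (insert x I)
  have "F x \<inter> (\<Union>i\<in>I. F i) = {}" using insert.prems insert.hyps by blast
  then show ?case using insert by (simp add: ecard_Un_disjoint)
qed

lemma ecard_quot_le:
  assumes "\<forall>x\<in>H. \<forall>y\<in>H. f x = f y \<longrightarrow> g x = g y"
  shows "ecard (g ` H) \<le> ecard (f ` H)"
proof -
  have "g ` H = (\<lambda>v. g (inv_into H f v)) ` (f ` H)"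
  proof (intro equalityI subsetI)
    fix z assume "z \<in> g ` H"
    then obtain x where x: "x \<in> H" "z = g x" by blast
    have "inv_into H f (f x) \<in> H" "f (inv_into H f (f x)) = f x"
      using x by (auto simp: inv_into_into f_inv_into_f)
    then have "g (inv_into H f (f x)) = g x" using assms x by blast
    then show "z \<in> (\<lambda>v. g (inv_into H f v)) ` (f ` H)" using x by force
  next
    fix z assume "z \<in> (\<lambda>v. g (inv_into H f v)) ` (f ` H)"
    then show "z \<in> g ` H" by (auto simp: inv_into_into)
  qed
  then show ?thesis by (metis ecard_image_le)
qed

lemma (in group) rcos_eq_iff:
  assumes "subgroup H G" "x \<in> carrier G" "y \<in> carrier G"
  shows "(H #> x = H #> y) = (x \<otimes> inv y \<in> H)"
proof
  assume "H #> x = H #> y"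
  then have "x \<in> H #> y" using rcos_self[OF assms(2,1)] by simp
  then show "x \<otimes> inv y \<in> H" using subgroup.rcos_module_imp[OF assms(1) is_group assms(3)] by blast
next
  assume "x \<otimes> inv y \<in> H"
  then have "x \<in> H #> y" using subgroup.rcos_module_rev[OF assms(1) is_group assms(3,2)] by blast
  then show "H #> x = H #> y" using repr_independence[OF _ assms(3,1)] by simp
qed

lemma (in group) idx_le:
  assumes sA: "subgroup A G" and sB: "subgroup B G" and sD: "subgroup D G"
  shows "sub_index G A (A \<inter> D) \<le> sub_index G A (A \<inter> B) * sub_index G B (B \<inter> D)"
proof -
  have sAB: "subgroup (A \<inter> B) G" using subgroups_Inter_pair sA sB by blast
  have sBD: "subgroup (B \<inter> D) G" using subgroups_Inter_pair sB sD by blast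
  have sAD: "subgroup (A \<inter> D) G" using subgroups_Inter_pair sA sD by blast
  define S where "S = (\<lambda>a. (A \<inter> B) #> a) ` A"
  define T where "T = (\<lambda>b. (B \<inter> D) #> b) ` B"
  define \<rho> where "\<rho> = (\<lambda>X::'a set. SOME r. r \<in> X)"
  define f where "f = (\<lambda>a. ((A \<inter> B) #> a, (B \<inter> D) #> (a \<otimes> inv (\<rho> ((A \<inter> B) #> a)))))"
  have carrA: "a \<in> carrier G" if "a \<in> A" for a using subgroup.mem_carrier[OF sA that] .
  have rho: "\<rho> ((A \<inter> B) #> a) \<in> carrier G \<and> a \<otimes> inv (\<rho> ((A \<inter> B) #> a)) \<in> A \<inter> B" if a: "a \<in> A" for a
  proof -
    have "a \<in> (A \<inter> B) #> a" using rcos_self[OF carrA[OF a] sAB] .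
    then have r: "\<rho> ((A \<inter> B) #> a) \<in> (A \<inter> B) #> a" unfolding \<rho>_def by (rule someI)
    have rc: "\<rho> ((A \<inter> B) #> a) \<in> carrier G"
      using subgroup.elemrcos_carrier[OF sAB is_group carrA[OF a] r] .
    have "(A \<inter> B) #> a = (A \<inter> B) #> \<rho> ((A \<inter> B) #> a)"
      using repr_independence[OF r carrA[OF a] sAB] .
    then show ?thesis using rcos_eq_iff[OF sAB carrA[OF a] rc] rc by simp
  qed
  have fin: "f ` A \<subseteq> S \<times> T"
  proof
    fix z assume "z \<in> f ` A"
    then obtain a where a: "a \<in> A" "z = f a" by blast
    then show "z \<in> S \<times> T" using rho[OF a(1)] unfolding f_def S_def T_def by auto
  qed
  have inj: "\<forall>x\<in>A. \<forall>y\<in>A. f x = f y \<longrightarrow> (A \<inter> D) #> x = (A \<inter> D) #> y"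
  proof (intro ballI impI)
    fix x y assume x: "x \<in> A" and y: "y \<in> A" and fxy: "f x = f y"
    have X: "(A \<inter> B) #> x = (A \<inter> B) #> y" using fxy unfolding f_def by simp
    define r where "r = \<rho> ((A \<inter> B) #> x)"
    have rc: "r \<in> carrier G" and ix: "x \<otimes> inv r \<in> A \<inter> B" using rho[OF x] unfolding r_def by auto
    have iy: "y \<otimes> inv r \<in> A \<inter> B" using rho[OF y] X unfolding r_def by auto
    have "(B \<inter> D) #> (x \<otimes> inv r) = (B \<inter> D) #> (y \<otimes> inv r)"
      using fxy X unfolding f_def r_def by simp
    then have "(x \<otimes> inv r) \<otimes> inv (y \<otimes> inv r) \<in> B \<inter> D"
      using rcos_eq_iff[OF sBD] rc carrA[OF x] carrA[OF y] by simp
    moreover have "(x \<otimes> inv r) \<otimes> inv (y \<otimes> inv r) = x \<otimes> inv y"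
      using rc carrA[OF x] carrA[OF y] by (simp add: inv_mult_group m_assoc, simp add: m_assoc[symmetric])
    ultimately have "x \<otimes> inv y \<in> B \<inter> D" by simp
    moreover have "x \<otimes> inv y \<in> A"
      using x y sA by (simp add: subgroup.m_closed subgroup.m_inv_closed)
    ultimately have "x \<otimes> inv y \<in> A \<inter> D" by simp
    then show "(A \<inter> D) #> x = (A \<inter> D) #> y"
      using rcos_eq_iff[OF sAD carrA[OF x] carrA[OF y]] by simp
  qed
  have "sub_index G A (A \<inter> D) = ecard ((\<lambda>a. (A \<inter> D) #> a) ` A)"
    unfolding sub_index_def by (simp add: Setcompr_eq_image)
  also have "\<dots> \<le> ecard (f ` A)" by (rule ecard_quot_le[OF inj])
  also have "\<dots> \<le> ecard (S \<times> T)" by (rule ecard_mono[OF fin])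
  also have "\<dots> = ecard S * ecard T" by (rule ecard_times)
  also have "\<dots> = sub_index G A (A \<inter> B) * sub_index G B (B \<inter> D)"
    unfolding sub_index_def S_def T_def by (simp add: Setcompr_eq_image)
  finally show ?thesis .
qed

lemma (in group) commens_le:
  assumes sA: "subgroup A G" and sB: "subgroup B G" and sD: "subgroup D G"
  shows "commens G A D \<le> commens G A B * commens G B D"
proof -
  have 1: "sub_index G A (A \<inter> D) \<le> sub_index G A (A \<inter> B) * sub_index G B (B \<inter> D)"
    by (rule idx_le[OF sA sB sD])
  have 2: "sub_index G D (A \<inter> D) \<le> sub_index G D (B \<inter> D) * sub_index G B (A \<inter> B)"
    using idx_le[OF sD sB sA] by (simp add: Int_commute)
  have "commens G A D \<le> (sub_index G A (A \<inter> B) * sub_index G B (B \<inter> D)) *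
      (sub_index G D (B \<inter> D) * sub_index G B (A \<inter> B))"
    unfolding commens_def by (rule mult_mono[OF 1 2]) auto
  also have "\<dots> = commens G A B * commens G B D"
    unfolding commens_def by (simp add: ac_simps)
  finally show ?thesis .
qed

lemma commens_sym: "commens G A B = commens G B A"
  unfolding commens_def by (simp add: Int_commute mult.commute)

lemma (in group) commens_ge1:
  assumes "subgroup A G" "subgroup D G"
  shows "1 \<le> commens G A D"
proof -
  have i: "1 \<le> sub_index G H K" if "subgroup H G" for H K
  proof -
    have "\<one> \<in> H" using that subgroup.one_closed by blast
    then show ?thesis unfolding sub_index_def by (intro ecard_ge1) blast
  qed
  have "(1::enat) * 1 \<le> commens G A D"
    unfolding commens_def by (rule mult_mono[OF i i]) (use assms in auto)
  then show ?thesis by simp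
qed

lemma cnt_C_eq:
  "cnt_C G A n = ecard {D. subgroup D G \<and> (\<exists>k\<in>{1..n}. commens G A D = enat k)}"
proof -
  have "cnt_C G A n = ecard (\<Union>k\<in>{1..n}. {D. subgroup D G \<and> commens G A D = enat k})"
    unfolding cnt_C_def cnt_k_def by (rule ecard_UN_disjoint) auto
  also have "(\<Union>k\<in>{1..n}. {D. subgroup D G \<and> commens G A D = enat k}) =
      {D. subgroup D G \<and> (\<exists>k\<in>{1..n}. commens G A D = enat k)}" by blast
  finally show ?thesis .
qed

lemma (in group) one_dir:
  assumes sA: "subgroup A G" and sB: "subgroup B G" and fin: "commens G A B < \<infinity>"
  shows "fpreceq (cnt_C G A) (cnt_C G B)"
proof -
  obtain m where m: "commens G B A = enat m"
  proof -
    have "commens G B A < \<infinity>" using fin commens_sym[of G A B] by simp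
    then show thesis using that by (cases "commens G B A") auto
  qed
  have m1: "1 \<le> m" using commens_ge1[OF sB sA] m by (simp add: one_enat_def)
  have sub: "{D. subgroup D G \<and> (\<exists>k\<in>{1..n}. commens G A D = enat k)} \<subseteq>
      {D. subgroup D G \<and> (\<exists>k\<in>{1..m*n}. commens G B D = enat k)}" for n
  proof
    fix D assume "D \<in> {D. subgroup D G \<and> (\<exists>k\<in>{1..n}. commens G A D = enat k)}"
    then obtain k where sD: "subgroup D G" and k: "k \<in> {1..n}" and c: "commens G A D = enat k" by blast
    have "commens G B D \<le> enat (m * k)"
      using commens_le[OF sB sA sD] m c by simp
    then obtain j where j: "commens G B D = enat j" "j \<le> m * k"
      by (metis enat_ile enat_ord_simps(1))
    have "1 \<le> j" using commens_ge1[OF sB sD] j by (simp add: one_enat_def)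
    moreover have "m * k \<le> m * n" using k by simp
    ultimately have "j \<in> {1..m*n}" using j(2) by (meson atLeastAtMost_iff le_trans)
    then show "D \<in> {D. subgroup D G \<and> (\<exists>k\<in>{1..m*n}. commens G B D = enat k)}"
      using sD j(1) by blast
  qed
  show ?thesis unfolding fpreceq_def
  proof (intro exI[of _ m] conjI allI)
    show "0 < m" using m1 by simp
    fix n
    have "cnt_C G A n \<le> cnt_C G B (m * n)"
      unfolding cnt_C_eq by (rule ecard_mono[OF sub])
    also have "\<dots> = 1 * cnt_C G B (m * n)" by simp
    also have "\<dots> \<le> enat m * cnt_C G B (m * n)"
      by (rule mult_right_mono) (use m1 in \<open>auto simp: one_enat_def\<close>)
    finally show "cnt_C G A n \<le> enat m * cnt_C G B (m * n)" .
  qed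
qed

theorem proposition2:
  fixes G :: "('a, 'b) monoid_scheme" and A B :: "'a set"
  assumes "group G" and "subgroup A G" and "subgroup B G"
    and "commens G A B < \<infinity>"
  shows "fsimeq (cnt_C G A) (cnt_C G B)"
proof -
  have c2: "commens G B A < \<infinity>" using assms(4) commens_sym[of G A B] by simp
  show ?thesis unfolding fsimeq_def
    using group.one_dir[OF assms(1,2,3,4)] group.one_dir[OF assms(1,3,2) c2] by (rule conjI)
qed

end
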